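(* Every consistent piece-wise quadratic function $g:\mathbb{R}\to\mathbb{R}$ has a non-decreasing indexing function $I_g$.
   Context: A continuous $g$ is piece-wise quadratic with $N$ pieces if there exist $-\infty=\tau_0<\tau_1<\dots<\tau_N=+\infty$ and quadratic $p_1,\dots,p_N$ with $g=p_k$ on $[\tau_{k-1},\tau_k]$ and $p_k\ne p_{k+1}$ as functions; it is consistent if every $p_k$ is strongly convex and $g=\min_kp_k$ on $\mathbb{R}$. For such $g$ with strongly convex pieces, the indexing function is $I_g(\beta)=\min\{k:\ \exists\,\alpha^\star\in\arg\max_\alpha\{\beta\alpha-g(\alpha)\}\text{ with }\tau_{k-1}\le\alpha^\star\le\tau_k\}$. *)

theory Defs
  imports "HOL-Analysis.Analysis" "HOL-Library.Extended_Real"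
begin

type_synonym quad = "real \<times> real \<times> real"

definition qeval :: "quad \<Rightarrow> real \<Rightarrow> real" where
  "qeval q x = fst q * x ^ 2 + fst (snd q) * x + snd (snd q)"

definition strongly_convex_quad :: "quad \<Rightarrow> bool" where
  "strongly_convex_quad q \<longleftrightarrow> fst q > 0"

definition pw_quadratic ::
  "(real \<Rightarrow> real) \<Rightarrow> nat \<Rightarrow> (nat \<Rightarrow> ereal) \<Rightarrow> (nat \<Rightarrow> quad) \<Rightarrow> bool" where
  "pw_quadratic g N tau p \<longleftrightarrow>
     N \<ge> 1 \<and> continuous_on UNIV g \<and>
     tau 0 = -\<infinity> \<and> tau N = \<infinity> \<and>
     (\<forall>k<N. tau k < tau (Suc k)) \<and>
     (\<forall>k\<in>{1..N}. \<forall>x. tau (k - 1) \<le> ereal x \<and> ereal x \<le> tau k \<longrightarrow> g x = qeval (p k) x) \<and>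
     (\<forall>k\<in>{1..<N}. qeval (p k) \<noteq> qeval (p (Suc k)))"

definition consistent_pwq ::
  "(real \<Rightarrow> real) \<Rightarrow> nat \<Rightarrow> (nat \<Rightarrow> ereal) \<Rightarrow> (nat \<Rightarrow> quad) \<Rightarrow> bool" where
  "consistent_pwq g N tau p \<longleftrightarrow>
     pw_quadratic g N tau p \<and>
     (\<forall>k\<in>{1..N}. strongly_convex_quad (p k)) \<and>
     (\<forall>x. g x = Min ((\<lambda>k. qeval (p k) x) ` {1..N}))"

definition indexing_fun ::
  "(real \<Rightarrow> real) \<Rightarrow> (nat \<Rightarrow> ereal) \<Rightarrow> real \<Rightarrow> nat" where
  "indexing_fun g tau beta = (LEAST k. 1 \<le> k \<and> (\<exists>a.
      (\<forall>a'. beta * a' - g a' \<le> beta * a - g a) \<and>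
      tau (k - 1) \<le> ereal a \<and> ereal a \<le> tau k))"

end

theory Submission
  imports Defs
begin

lemma quad_max:
  fixes A B C beta a :: real
  assumes "A > 0"
  shows "beta*a - (A*a^2+B*a+C) \<le> beta*((beta-B)/(2*A)) - (A*((beta-B)/(2*A))^2+B*((beta-B)/(2*A))+C)"
proof -
  define m where "m = (beta-B)/(2*A)"
  have bm: "beta - B = 2*A*m" using assms by (simp add: m_def)
  have "(beta*m - (A*m^2+B*m+C)) - (beta*a - (A*a^2+B*a+C)) = (beta-B)*(m-a) - A*(m^2-a^2)"
    by (simp add: algebra_simps)
  also have "\<dots> = A*(m-a)^2" unfolding bm by (simp add: power2_eq_square algebra_simps)
  also have "\<dots> \<ge> 0" using assms by simp
  finally show ?thesis unfolding m_def by simp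
qed

lemma exists_max:
  assumes "consistent_pwq g N tau p"
  shows "\<exists>a. \<forall>a'. beta * a' - g a' \<le> beta * a - g a"
proof -
  define K where "K = {1..N}"
  have N1: "N \<ge> 1" using assms unfolding consistent_pwq_def pw_quadratic_def by simp
  have fK: "finite K" and neK: "K \<noteq> {}" using N1 by (auto simp: K_def)
  have sc: "\<And>k. k \<in> K \<Longrightarrow> fst (p k) > 0"
    using assms unfolding consistent_pwq_def strongly_convex_quad_def K_def by auto
  have gmin: "\<And>x. g x = Min ((\<lambda>k. qeval (p k) x) ` K)"
    using assms unfolding consistent_pwq_def K_def by auto
  define m where "m k = (beta - fst (snd (p k))) / (2 * fst (p k))" for k
  define M where "M k = beta * m k - qeval (p k) (m k)" for k
  have Mbound: "\<And>k a. k \<in> K \<Longrightarrow> beta * a - qeval (p k) a \<le> M k"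
    unfolding M_def m_def qeval_def using quad_max sc by blast
  obtain ks where ks: "ks \<in> K" "M ks = Max (M ` K)"
    using Max_in[of "M ` K"] fK neK by (metis (no_types, lifting) empty_is_image finite_imageI imageE)
  show ?thesis
  proof (intro exI allI)
    fix a'
    obtain j where j: "j \<in> K" "g a' = qeval (p j) a'"
      using Min_in[of "(\<lambda>k. qeval (p k) a') ` K"] fK neK gmin by (metis (no_types, lifting) empty_is_image finite_imageI imageE)
    have "beta * a' - g a' \<le> M j" using j Mbound by simp
    also have "\<dots> \<le> M ks" using ks j fK by simp
    also have "M ks \<le> beta * m ks - g (m ks)"
    proof -
      have "g (m ks) \<le> qeval (p ks) (m ks)" using gmin[of "m ks"] fK ks by simp
      thus ?thesis unfolding M_def by simp
    qed
    finally show "beta * a' - g a' \<le> beta * m ks - g (m ks)" .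
  qed
qed

lemma find_piece:
  fixes tau :: "nat \<Rightarrow> ereal" and k2 :: nat
  assumes "tau 0 = -\<infinity>" "ereal a \<le> tau k2"
  shows "\<exists>k. 1 \<le> k \<and> k \<le> k2 \<and> tau (k - 1) \<le> ereal a \<and> ereal a \<le> tau k"
proof -
  define k where "k = (LEAST k. ereal a \<le> tau k)"
  have 1: "ereal a \<le> tau k" unfolding k_def by (rule LeastI[of _ k2]) (rule assms(2))
  have 2: "k \<le> k2" unfolding k_def by (rule Least_le) (rule assms(2))
  have k0: "k \<noteq> 0" using 1 assms(1) by (metis MInfty_neq_ereal(1) ereal_infty_less_eq(2))
  have "\<not> ereal a \<le> tau (k - 1)"
  proof
    assume "ereal a \<le> tau (k - 1)"
    hence "k \<le> k - 1" unfolding k_def by (rule Least_le)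
    thus False using k0 by simp
  qed
  thus ?thesis using 1 2 k0 by (intro exI[of _ k]) auto
qed

theorem lemma5:
  fixes g :: "real \<Rightarrow> real" and N :: nat and tau :: "nat \<Rightarrow> ereal" and p :: "nat \<Rightarrow> quad"
  assumes "consistent_pwq g N tau p"
  shows "mono (indexing_fun g tau)"
proof (rule monoI)
  have t0: "tau 0 = -\<infinity>" and tN: "tau N = \<infinity>"
    using assms unfolding consistent_pwq_def pw_quadratic_def by auto
  define P where "P beta k = (1 \<le> k \<and> (\<exists>a.
      (\<forall>a'. beta * a' - g a' \<le> beta * a - g a) \<and>
      tau (k - 1) \<le> ereal a \<and> ereal a \<le> tau k))" for beta k
  have idx: "indexing_fun g tau beta = (LEAST k. P beta k)" for beta
    unfolding indexing_fun_def P_def by simp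
  have exP: "\<exists>k. P beta k" for beta
  proof -
    obtain a where a: "\<forall>a'. beta * a' - g a' \<le> beta * a - g a"
      using exists_max[OF assms] by blast
    have "ereal a \<le> tau N" using tN by simp
    then obtain k where "1 \<le> k \<and> k \<le> N \<and> tau (k - 1) \<le> ereal a \<and> ereal a \<le> tau k"
      using find_piece[where tau=tau, OF t0] by blast
    thus ?thesis using a unfolding P_def by blast
  qed
  fix x y :: real
  assume xy: "x \<le> y"
  show "indexing_fun g tau x \<le> indexing_fun g tau y"
  proof (cases "x = y")
    case True thus ?thesis by simp
  next
    case False
    hence xy': "x < y" using xy by simp
    define k2 where "k2 = (LEAST k. P y k)"
    have "P y k2" unfolding k2_def using exP[of y] by (metis LeastI)
    then obtain a2 where a2: "\<forall>a'. y * a' - g a' \<le> y * a2 - g a2" "ereal a2 \<le> tau k2"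
      unfolding P_def by blast
    obtain a1 where a1: "\<forall>a'. x * a' - g a' \<le> x * a1 - g a1"
      using exists_max[OF assms] by blast
    have "(y - x) * (a2 - a1) \<ge> 0"
      using a1[rule_format, of a2] a2(1)[rule_format, of a1] by (simp add: algebra_simps)
    hence "a1 \<le> a2" using xy' by (simp add: zero_le_mult_iff)
    hence "ereal a1 \<le> tau k2" using a2(2) by (meson ereal_less_eq(3) order_trans)
    then obtain k where k: "1 \<le> k" "k \<le> k2" "tau (k - 1) \<le> ereal a1" "ereal a1 \<le> tau k"
      using find_piece[where tau=tau, OF t0] by blast
    have "P x k" unfolding P_def using k a1 by blast
    hence "(LEAST k. P x k) \<le> k" by (rule Least_le)
    thus ?thesis using k(2) unfolding idx k2_def by simp
  qed
qed

end
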